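(* For $0\le k\le n$, \[ q^{k^2}[2]_q^{k}\,S_B[n,k]=\sum_{\pi\in B_{\subseteq}([n],k)}q^{m(\pi)}. \]
   Context: $[k]_q=1+\dots+q^{k-1}$, $[0]_q=0$. $S_B[n,k]$ is defined by $S_B[0,k]=\delta_{0k}$ and $S_B[n,k]=S_B[n-1,k-1]+[2k+1]_qS_B[n-1,k]$ for $n\ge1$ (with $S_B[n-1,-1]=0$). For $S\subset\mathbb{Z}\setminus\{0\}$ and $\overline{S}=\{-i:i\in S\}$, a standard signed partition (SSP) of $S$ with $k$ blocks is a sequence $(S_1,\dots,S_k)$ of disjoint nonempty subsets of $S\cup\overline{S}$ such that $\{S_1,\dots,S_k,\overline{S_1},\dots,\overline{S_k}\}$ is a partition of $S\cup\overline{S}$ and $\min|S_1|\le\dots\le\min|S_k|$, where $|S_i|=\{|j|:j\in S_i\}$. A PSSP of $S$ is an SSP of a (possibly empty) subset of $S$; $B_{\subseteq}(S,k)$ is the set of PSSPs of $S$ with $k$ blocks. For $\pi=(S_1,\dots,S_k)$, $\mathrm{pos}(\pi)=\#\{x\in\bigcup_iS_i:x>0\}$ and $m(\pi)=2\sum_{i=1}^k i\cdot\#S_i-\mathrm{pos}(\pi)$. *)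

theory Defs
  imports Main
begin

definition qint :: "'a::comm_semiring_1 \<Rightarrow> nat \<Rightarrow> 'a" where
  "qint q k = (\<Sum>i<k. q ^ i)"

fun SB :: "'a::comm_semiring_1 \<Rightarrow> nat \<Rightarrow> nat \<Rightarrow> 'a" where
  "SB q 0 k = (if k = 0 then 1 else 0)"
| "SB q (Suc n) 0 = qint q 1 * SB q n 0"
| "SB q (Suc n) (Suc k) = SB q n k + qint q (2 * Suc k + 1) * SB q n (Suc k)"

definition neg_set :: "int set \<Rightarrow> int set" where
  "neg_set A = uminus ` A"

definition ssp :: "int set \<Rightarrow> int set list \<Rightarrow> bool" where
  "ssp S \<pi> \<longleftrightarrow>
     (\<forall>i<length \<pi>. \<pi> ! i \<noteq> {}) \<and>
     (\<forall>i<length \<pi>. \<forall>j<length \<pi>. i \<noteq> j \<longrightarrow>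
         \<pi> ! i \<inter> \<pi> ! j = {} \<and> neg_set (\<pi> ! i) \<inter> neg_set (\<pi> ! j) = {}) \<and>
     (\<forall>i<length \<pi>. \<forall>j<length \<pi>. \<pi> ! i \<inter> neg_set (\<pi> ! j) = {}) \<and>
     (\<Union>(set \<pi>) \<union> \<Union>(neg_set ` set \<pi>) = S \<union> neg_set S) \<and>
     sorted (map (\<lambda>B. Min (abs ` B)) \<pi>)"

definition pssp :: "int set \<Rightarrow> nat \<Rightarrow> int set list set" where
  "pssp S k = {\<pi>. length \<pi> = k \<and> (\<exists>T. T \<subseteq> S \<and> ssp T \<pi>)}"

definition pos :: "int set list \<Rightarrow> nat" where
  "pos \<pi> = card {x \<in> \<Union>(set \<pi>). x > 0}"

text \<open>m(\<pi>) = 2 \<Sum>_{i=1}^k i #S_i - pos(\<pi>) (the list is 0-indexed, so block i+1 is \<pi>!i).\<close>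
definition mstat :: "int set list \<Rightarrow> int" where
  "mstat \<pi> = 2 * (\<Sum>i<length \<pi>. int (i + 1) * int (card (\<pi> ! i))) - int (pos \<pi>)"

end

theory Submission
  imports Defs
begin



definition bmin :: "int set \<Rightarrow> int" where "bmin B = Min (abs ` B)"

definition good :: "nat \<Rightarrow> int set list \<Rightarrow> bool" where
 "good n \<pi> \<longleftrightarrow> (\<forall>i<length \<pi>. \<pi>!i \<noteq> {}) \<and>
   (\<forall>i<length \<pi>. \<forall>j<length \<pi>. i \<noteq> j \<longrightarrow> \<pi>!i \<inter> \<pi>!j = {}) \<and>
   (\<forall>x\<in>\<Union>(set \<pi>). -x \<notin> \<Union>(set \<pi>) \<and> x \<noteq> 0 \<and> \<bar>x\<bar> \<le> int n) \<and>
   sorted (map bmin \<pi>)"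

definition PP :: "nat \<Rightarrow> nat \<Rightarrow> int set list set" where
 "PP n k = {\<pi>. length \<pi> = k \<and> good n \<pi>}"

lemma Union_set_nth: "\<Union>(set xs) = (\<Union>i\<in>{..<length xs}. xs!i)"
  by (auto simp: in_set_conv_nth) (metis nth_mem)

lemma pssp_eq: "pssp {1..int n} k = PP n k"
proof (intro set_eqI iffI)
  fix \<pi> assume "\<pi> \<in> pssp {1..int n} k"
  then obtain T where len: "length \<pi> = k" and T: "T \<subseteq> {1..int n}" and s: "ssp T \<pi>"
    by (auto simp: pssp_def)
  have ne: "\<forall>i<length \<pi>. \<pi>!i \<noteq> {}" and dj: "\<forall>i<length \<pi>. \<forall>j<length \<pi>. i \<noteq> j \<longrightarrow> \<pi>!i \<inter> \<pi>!j = {}"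
   and dn: "\<forall>i<length \<pi>. \<forall>j<length \<pi>. \<pi>!i \<inter> neg_set (\<pi>!j) = {}"
   and un: "\<Union>(set \<pi>) \<union> \<Union>(neg_set ` set \<pi>) = T \<union> neg_set T"
   and so: "sorted (map (\<lambda>B. Min (abs ` B)) \<pi>)"
    using s unfolding ssp_def by auto
  have "(\<lambda>B. Min (abs ` B)) = bmin" by (rule ext) (simp add: bmin_def)
  with so have so': "sorted (map bmin \<pi>)" by simp
  have 3: "-x \<notin> \<Union>(set \<pi>) \<and> x \<noteq> 0 \<and> \<bar>x\<bar> \<le> int n" if x: "x \<in> \<Union>(set \<pi>)" for x
  proof -
    from x un have "x \<in> T \<union> neg_set T" by blast
    with T have a: "x \<noteq> 0 \<and> \<bar>x\<bar> \<le> int n" by (auto simp: neg_set_def)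
    have "-x \<notin> \<Union>(set \<pi>)"
    proof
      assume "-x \<in> \<Union>(set \<pi>)"
      then obtain j where j: "j < length \<pi>" "-x \<in> \<pi>!j" by (auto simp: in_set_conv_nth)
      from x obtain i where i: "i < length \<pi>" "x \<in> \<pi>!i" by (auto simp: in_set_conv_nth)
      have "x \<in> neg_set (\<pi>!j)" using j(2) unfolding neg_set_def by (metis image_eqI minus_minus)
      with dn i j show False by blast
    qed
    with a show ?thesis by blast
  qed
  show "\<pi> \<in> PP n k" unfolding PP_def good_def using len ne dj 3 so' by blast
next
  fix \<pi> assume "\<pi> \<in> PP n k"
  hence len: "length \<pi> = k" and g: "good n \<pi>" by (auto simp: PP_def)
  let ?U = "\<Union>(set \<pi>)"
  have ne: "\<forall>i<length \<pi>. \<pi>!i \<noteq> {}" and dj: "\<forall>i<length \<pi>. \<forall>j<length \<pi>. i \<noteq> j \<longrightarrow> \<pi>!i \<inter> \<pi>!j = {}"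
    and 3: "\<forall>x\<in>?U. -x \<notin> ?U \<and> x \<noteq> 0 \<and> \<bar>x\<bar> \<le> int n" and so: "sorted (map bmin \<pi>)"
    using g unfolding good_def by auto
  define T where "T = abs ` ?U"
  have T: "T \<subseteq> {1..int n}" using 3 by (force simp: T_def)
  have "ssp T \<pi>" unfolding ssp_def
  proof (intro conjI allI impI)
    show "\<pi>!i \<noteq> {}" if "i < length \<pi>" for i using ne that by blast
    show "\<pi>!i \<inter> \<pi>!j = {}" if "i < length \<pi>" "j < length \<pi>" "i \<noteq> j" for i j
      using dj that by blast
    show "neg_set (\<pi>!i) \<inter> neg_set (\<pi>!j) = {}" if "i < length \<pi>" "j < length \<pi>" "i \<noteq> j" for i j
      using dj[rule_format, OF that] unfolding neg_set_def by auto
    show "\<pi>!i \<inter> neg_set (\<pi>!j) = {}" if "i < length \<pi>" "j < length \<pi>" for i j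
    proof -
      have "x \<in> ?U" if "x \<in> \<pi>!i" for x using that \<open>i < length \<pi>\<close> by auto
      moreover have "y \<in> ?U" if "y \<in> \<pi>!j" for y using that \<open>j < length \<pi>\<close> by auto
      ultimately show ?thesis using 3 unfolding neg_set_def by fastforce
    qed
    show "\<Union>(set \<pi>) \<union> \<Union>(neg_set ` set \<pi>) = T \<union> neg_set T"
    proof (intro equalityI subsetI)
      fix x assume "x \<in> \<Union>(set \<pi>) \<union> \<Union>(neg_set ` set \<pi>)"
      then obtain y where y: "y \<in> ?U" "x = y \<or> x = -y" unfolding neg_set_def by auto
      have "\<bar>y\<bar> \<in> T" using y(1) by (simp add: T_def)
      then show "x \<in> T \<union> neg_set T" using y(2) unfolding neg_set_def
        by (cases "y \<ge> 0") (auto intro: image_eqI[where x="\<bar>y\<bar>"])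
    next
      fix x assume "x \<in> T \<union> neg_set T"
      then obtain y where y: "y \<in> ?U" "x = \<bar>y\<bar> \<or> x = -\<bar>y\<bar>" unfolding neg_set_def T_def by auto
      then obtain B where B: "B \<in> set \<pi>" "y \<in> B" by auto
      have "x = y \<or> x = -y" using y(2) by (cases "y \<ge> 0") auto
      then show "x \<in> \<Union>(set \<pi>) \<union> \<Union>(neg_set ` set \<pi>)" using B unfolding neg_set_def by force
    qed
    have "(\<lambda>B. Min (abs ` B)) = bmin" by (rule ext) (simp add: bmin_def)
    then show "sorted (map (\<lambda>B. Min (abs ` B)) \<pi>)" using so by simp
  qed
  thus "\<pi> \<in> pssp {1..int n} k" using T len by (auto simp: pssp_def)
qed





lemma goodD:
  assumes "good n \<pi>" "i < length \<pi>" "x \<in> \<pi>!i"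
  shows "x \<noteq> 0" "\<bar>x\<bar> \<le> int n" "\<And>j. j < length \<pi> \<Longrightarrow> -x \<notin> \<pi>!j"
    "\<And>j. j < length \<pi> \<Longrightarrow> j \<noteq> i \<Longrightarrow> x \<notin> \<pi>!j" "\<pi>!i \<noteq> {}"
proof -
  have xU: "x \<in> \<Union>(set \<pi>)" using assms(2,3) by auto
  show "x \<noteq> 0" "\<bar>x\<bar> \<le> int n" using assms(1) xU unfolding good_def by auto
  show "-x \<notin> \<pi>!j" if "j < length \<pi>" for j
    using assms(1) xU that unfolding good_def by (meson UnionI nth_mem)
  show "x \<notin> \<pi>!j" if "j < length \<pi>" "j \<noteq> i" for j
    using assms(1,2,3) that unfolding good_def by blast
  show "\<pi>!i \<noteq> {}" using assms(1,2) unfolding good_def by blast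
qed

lemma good_ne: "good n \<pi> \<Longrightarrow> i < length \<pi> \<Longrightarrow> \<pi>!i \<noteq> {}"
  unfolding good_def by blast

lemma good_sub: assumes "good n \<pi>" "i < length \<pi>" shows "\<pi>!i \<subseteq> {-int n..int n}"
proof
  fix x assume "x \<in> \<pi>!i"
  then have "\<bar>x\<bar> \<le> int n" using goodD(2)[OF assms] by blast
  then show "x \<in> {-int n..int n}" by auto
qed

lemma good_set_sub: "good n \<pi> \<Longrightarrow> B \<in> set \<pi> \<Longrightarrow> B \<subseteq> {-int n..int n}"
  by (metis good_sub in_set_conv_nth)

lemma good_fin: assumes "good n \<pi>" "i < length \<pi>" shows "finite (\<pi>!i)"
  by (rule finite_subset[OF good_sub[OF assms]]) simp

lemma good_fin_set: "good n \<pi> \<Longrightarrow> B \<in> set \<pi> \<Longrightarrow> finite B"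
  by (metis good_fin in_set_conv_nth)

lemma finite_PP: "finite (PP n k)"
proof -
  have "PP n k \<subseteq> {xs. set xs \<subseteq> Pow {-int n..int n} \<and> length xs = k}"
    unfolding PP_def using good_set_sub by blast
  moreover have "finite {xs. set xs \<subseteq> Pow {-int n..int n} \<and> length xs = k}"
    by (rule finite_lists_length_eq) simp
  ultimately show ?thesis by (rule finite_subset)
qed

lemma bmin_le: "finite B \<Longrightarrow> x \<in> B \<Longrightarrow> bmin B \<le> \<bar>x\<bar>"
  unfolding bmin_def by (simp add: Min_le)

lemma bmin_insert:
  assumes "finite B" "B \<noteq> {}" "\<forall>x\<in>B. \<bar>x\<bar> < \<bar>s\<bar>"
  shows "bmin (insert s B) = bmin B"
proof -
  obtain x where x: "x \<in> B" using assms(2) by blast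
  have "bmin B \<le> \<bar>x\<bar>" using bmin_le assms(1) x by blast
  also have "\<bar>x\<bar> < \<bar>s\<bar>" using assms(3) x by blast
  finally have "bmin B < \<bar>s\<bar>" .
  then show ?thesis using assms(1,2) unfolding bmin_def by (simp add: Min_insert)
qed

lemma mstat_nonneg:
  assumes "good n \<pi>" shows "mstat \<pi> \<ge> 0"
proof -
  have "pos \<pi> \<le> card (\<Union>(set \<pi>))"
    unfolding pos_def by (rule card_mono) (auto intro: good_fin_set[OF assms])
  also have "\<dots> \<le> (\<Sum>i<length \<pi>. card (\<pi>!i))"
    unfolding Union_set_nth by (rule card_UN_le) simp
  finally have "int (pos \<pi>) \<le> (\<Sum>i<length \<pi>. int (card (\<pi>!i)))"
    by (metis of_nat_le_iff of_nat_sum)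
  also have "\<dots> \<le> (\<Sum>i<length \<pi>. int (i+1) * int (card (\<pi>!i)))"
    by (rule sum_mono) (simp only: of_nat_mult[symmetric] of_nat_le_iff, simp)
  finally show ?thesis unfolding mstat_def by simp
qed

lemma Union_update: "i < length xs \<Longrightarrow> \<Union>(set (xs[i := insert s (xs!i)])) = insert s (\<Union>(set xs))"
  unfolding Union_set_nth by (auto simp: nth_list_update split: if_splits)

lemma pos_insert:
  assumes "finite U" "s \<notin> U"
  shows "card {x \<in> insert s U. x > 0} = card {x\<in>U. (x::int) > 0} + (if s > 0 then 1 else 0)"
proof -
  have "{x \<in> insert s U. x > 0} = (if s > 0 then insert s {x\<in>U. x > 0} else {x\<in>U. x > 0})" by auto
  then show ?thesis using assms by simp
qed

lemma fin_U: "good n \<pi> \<Longrightarrow> finite (\<Union>(set \<pi>))"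
  using good_fin_set by blast

lemma mstat_ins:
  assumes g: "good n \<pi>" and i: "i < length \<pi>" and s: "\<bar>s\<bar> = int n + 1"
  shows "mstat (\<pi>[i := insert s (\<pi>!i)]) = mstat \<pi> + 2 * (int i + 1) - (if s > 0 then 1 else 0)"
proof -
  have sn: "s \<notin> \<pi>!l" if "l < length \<pi>" for l using goodD(2)[OF g that] s by force
  have sU: "s \<notin> \<Union>(set \<pi>)" using sn by (auto simp: in_set_conv_nth)
  have pos: "int (pos (\<pi>[i := insert s (\<pi>!i)])) = int (pos \<pi>) + (if s > 0 then 1 else 0)"
    unfolding pos_def Union_update[OF i] using pos_insert[OF fin_U[OF g] sU] by simp
  have c: "int (card ((\<pi>[i := insert s (\<pi>!i)])!l)) = int (card (\<pi>!l)) + (if l = i then 1 else 0)"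
    if "l < length \<pi>" for l
    using that good_fin[OF g that] sn[OF that] by (auto simp: nth_list_update)
  have "(\<Sum>l<length \<pi>. int (l + 1) * int (card ((\<pi>[i := insert s (\<pi>!i)])!l)))
      = (\<Sum>l<length \<pi>. int (l + 1) * int (card (\<pi>!l)) + (if l = i then int (l+1) else 0))"
    by (rule sum.cong) (simp_all add: c algebra_simps)
  also have "\<dots> = (\<Sum>l<length \<pi>. int (l + 1) * int (card (\<pi>!l))) + int (i+1)"
    using i by (simp add: sum.distrib)
  finally show ?thesis unfolding mstat_def using pos by simp
qed

lemma mstat_app:
  assumes g: "good n \<pi>" and s: "\<bar>s\<bar> = int n + 1"
  shows "mstat (\<pi> @ [{s}]) = mstat \<pi> + 2 * (int (length \<pi>) + 1) - (if s > 0 then 1 else 0)"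
proof -
  have sn: "s \<notin> \<pi>!l" if "l < length \<pi>" for l using goodD(2)[OF g that] s by force
  have sU: "s \<notin> \<Union>(set \<pi>)" using sn by (auto simp: in_set_conv_nth)
  have "\<Union>(set (\<pi> @ [{s}])) = insert s (\<Union>(set \<pi>))" by auto
  then have pos: "int (pos (\<pi> @ [{s}])) = int (pos \<pi>) + (if s > 0 then 1 else 0)"
    unfolding pos_def using pos_insert[OF fin_U[OF g] sU] by simp
  have "(\<Sum>l<length (\<pi> @ [{s}]). int (l + 1) * int (card ((\<pi> @ [{s}])!l)))
     = (\<Sum>l<length \<pi>. int (l + 1) * int (card ((\<pi> @ [{s}])!l))) + int (length \<pi> + 1)"
    by (simp add: lessThan_Suc)
  also have "(\<Sum>l<length \<pi>. int (l + 1) * int (card ((\<pi> @ [{s}])!l)))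
      = (\<Sum>l<length \<pi>. int (l + 1) * int (card (\<pi>!l)))"
    by (rule sum.cong) (simp_all add: nth_append)
  finally show ?thesis unfolding mstat_def using pos by simp
qed




lemma goodU: "good n \<pi> \<Longrightarrow> x \<in> \<Union>(set \<pi>) \<Longrightarrow> -x \<notin> \<Union>(set \<pi>) \<and> x \<noteq> 0 \<and> \<bar>x\<bar> \<le> int n"
  unfolding good_def by blast

lemma good_mono: "good n \<pi> \<Longrightarrow> n \<le> m \<Longrightarrow> good m \<pi>"
  unfolding good_def by force

lemma good_down:
  assumes "good (Suc n) \<pi>" "\<forall>x\<in>\<Union>(set \<pi>). \<bar>x\<bar> \<noteq> int n + 1"
  shows "good n \<pi>"
  using assms unfolding good_def by force

lemma good_dj: "good n \<pi> \<Longrightarrow> l < length \<pi> \<Longrightarrow> l' < length \<pi> \<Longrightarrow> l \<noteq> l' \<Longrightarrow> \<pi>!l \<inter> \<pi>!l' = {}"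
  unfolding good_def by blast

lemma ins_good:
  assumes g: "good n \<pi>" and i: "i < length \<pi>" and s: "\<bar>s\<bar> = int n + 1"
  shows "good (Suc n) (\<pi>[i := insert s (\<pi>!i)])"
proof -
  let ?r = "\<pi>[i := insert s (\<pi>!i)]"
  have sn: "s \<notin> \<pi>!l" "-s \<notin> \<pi>!l" if "l < length \<pi>" for l
    using goodD(2)[OF g that] s by force+
  have nth: "?r!l = (if l = i then insert s (\<pi>!i) else \<pi>!l)" if "l < length \<pi>" for l
    using that i by simp
  have U: "\<Union>(set ?r) = insert s (\<Union>(set \<pi>))" by (rule Union_update[OF i])
  have lt: "\<forall>x\<in>\<pi>!i. \<bar>x\<bar> < \<bar>s\<bar>" using goodD(2)[OF g i] s by force
  have "bmin (insert s (\<pi>!i)) = bmin (\<pi>!i)"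
    by (rule bmin_insert[OF good_fin[OF g i] good_ne[OF g i] lt])
  then have "map bmin ?r = (map bmin \<pi>)[i := bmin (\<pi>!i)]" by (simp add: map_update)
  also have "\<dots> = map bmin \<pi>" using i by (metis length_map list_update_id nth_map)
  finally have bm: "map bmin ?r = map bmin \<pi>" .
  have s0: "s \<noteq> 0" using s by auto
  show ?thesis unfolding good_def
  proof (intro conjI allI impI ballI)
    fix l assume "l < length ?r"
    then show "?r!l \<noteq> {}" using nth good_ne[OF g] by simp
  next
    fix l l' assume l: "l < length ?r" "l' < length ?r" "l \<noteq> l'"
    then show "?r!l \<inter> ?r!l' = {}"
      using nth[of l] nth[of l'] good_dj[OF g, of l l'] sn[of l] sn[of l'] l
      by (cases "l = i"; cases "l' = i") auto
  next
    fix x assume "x \<in> \<Union>(set ?r)"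
    then have "x = s \<or> x \<in> \<Union>(set \<pi>)" using U by auto
    then have "-x \<notin> \<Union>(set ?r) \<and> x \<noteq> 0 \<and> \<bar>x\<bar> \<le> int (Suc n)"
    proof
      assume "x = s"
      moreover have "-s \<notin> \<Union>(set \<pi>)" using sn(2) by (auto simp: in_set_conv_nth)
      ultimately show ?thesis using U s s0 by auto
    next
      assume xU: "x \<in> \<Union>(set \<pi>)"
      then have "-x \<notin> \<Union>(set \<pi>) \<and> x \<noteq> 0 \<and> \<bar>x\<bar> \<le> int n" by (rule goodU[OF g])
      then show ?thesis using U s by auto
    qed
    then show "-x \<notin> \<Union>(set ?r)" "x \<noteq> 0" "\<bar>x\<bar> \<le> int (Suc n)" by auto
  next
    show "sorted (map bmin ?r)" using bm g unfolding good_def by simp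
  qed
qed

lemma bmin_single: "bmin {s} = \<bar>s\<bar>" by (simp add: bmin_def)

lemma app_good:
  assumes g: "good n \<pi>" and s: "\<bar>s\<bar> = int n + 1"
  shows "good (Suc n) (\<pi> @ [{s}])"
proof -
  let ?r = "\<pi> @ [{s}]"
  have sn: "s \<notin> \<pi>!l" "-s \<notin> \<pi>!l" if "l < length \<pi>" for l
    using goodD(2)[OF g that] s by force+
  have U: "\<Union>(set ?r) = insert s (\<Union>(set \<pi>))" by simp
  have s0: "s \<noteq> 0" using s by auto
  have bl: "bmin B \<le> int n" if "B \<in> set \<pi>" for B
  proof -
    from that obtain l where l0: "l < length \<pi>" "\<pi>!l = B" by (auto simp: in_set_conv_nth)
    then have l: "l < length \<pi>" "B = \<pi>!l" by simp_all
    obtain x where x: "x \<in> B" using good_ne[OF g l(1)] l(2) by blast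
    have fB: "finite B" using good_fin[OF g l(1)] l(2) by simp
    have xi: "x \<in> \<pi>!l" using x l(2) by simp
    have "bmin B \<le> \<bar>x\<bar>" by (rule bmin_le[OF fB x])
    also have "\<bar>x\<bar> \<le> int n" by (rule goodD(2)[OF g l(1) xi])
    finally show ?thesis .
  qed
  show ?thesis unfolding good_def
  proof (intro conjI allI impI ballI)
    fix l assume "l < length ?r"
    then show "?r!l \<noteq> {}" using good_ne[OF g] by (simp add: nth_append)
  next
    fix l l' assume l: "l < length ?r" "l' < length ?r" "l \<noteq> l'"
    then show "?r!l \<inter> ?r!l' = {}"
      using good_dj[OF g, of l l'] sn[of l] sn[of l'] l
      by (cases "l < length \<pi>"; cases "l' < length \<pi>") (auto simp: nth_append)
  next
    fix x assume "x \<in> \<Union>(set ?r)"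
    then have "x = s \<or> x \<in> \<Union>(set \<pi>)" using U by auto
    then have "-x \<notin> \<Union>(set ?r) \<and> x \<noteq> 0 \<and> \<bar>x\<bar> \<le> int (Suc n)"
    proof
      assume "x = s"
      moreover have "-s \<notin> \<Union>(set \<pi>)" using sn(2) by (auto simp: in_set_conv_nth)
      ultimately show ?thesis using U s s0 by auto
    next
      assume xU: "x \<in> \<Union>(set \<pi>)"
      then have "-x \<notin> \<Union>(set \<pi>) \<and> x \<noteq> 0 \<and> \<bar>x\<bar> \<le> int n" by (rule goodU[OF g])
      then show ?thesis using U s by auto
    qed
    then show "-x \<notin> \<Union>(set ?r)" "x \<noteq> 0" "\<bar>x\<bar> \<le> int (Suc n)" by auto
  next
    have "sorted (map bmin \<pi>)" using g unfolding good_def by simp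
    moreover have "bmin B \<le> int n + 1" if "B \<in> set \<pi>" for B using bl[OF that] by simp
    ultimately show "sorted (map bmin ?r)" using s by (auto simp: sorted_append bmin_single)
  qed
qed

lemma del_good:
  assumes g: "good (Suc n) \<rho>" and i: "i < length \<rho>" and s: "\<bar>s\<bar> = int n + 1"
    and si: "s \<in> \<rho>!i" and ns: "\<rho>!i \<noteq> {s}"
  shows "good n (\<rho>[i := \<rho>!i - {s}])"
proof -
  let ?r = "\<rho>[i := \<rho>!i - {s}]"
  have nth: "?r!l = (if l = i then \<rho>!i - {s} else \<rho>!l)" if "l < length \<rho>" for l
    using that i by simp
  have ms: "-s \<notin> \<rho>!l" if "l < length \<rho>" for l using goodD(3)[OF g i si that] .
  have os: "s \<notin> \<rho>!l" if "l < length \<rho>" "l \<noteq> i" for l using goodD(4)[OF g i si that] .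
  have xl: "\<bar>x\<bar> < \<bar>s\<bar>" if "l < length \<rho>" "x \<in> \<rho>!l" "x \<noteq> s" for x l
  proof -
    have "\<bar>x\<bar> \<le> int (Suc n)" using goodD(2)[OF g that(1,2)] .
    moreover have "x \<noteq> -s" using ms[OF that(1)] that(2) by blast
    ultimately show ?thesis using s that(3) by (cases "x \<ge> 0"; cases "s \<ge> 0") auto
  qed
  have ne: "\<rho>!i - {s} \<noteq> {}" using si ns by blast
  have "bmin (insert s (\<rho>!i - {s})) = bmin (\<rho>!i - {s})"
    by (rule bmin_insert) (use good_fin[OF g i] ne xl[OF i] in auto)
  then have "bmin (\<rho>!i - {s}) = bmin (\<rho>!i)" using si by (simp add: insert_absorb)
  then have "map bmin ?r = (map bmin \<rho>)[i := bmin (\<rho>!i)]" by (simp add: map_update)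
  also have "\<dots> = map bmin \<rho>" using i by (metis length_map list_update_id nth_map)
  finally have bm: "map bmin ?r = map bmin \<rho>" .
  have U: "x \<in> \<Union>(set \<rho>) \<and> x \<noteq> s" if x: "x \<in> \<Union>(set ?r)" for x
  proof -
    obtain l where l: "l < length \<rho>" "x \<in> ?r!l" using x by (auto simp: in_set_conv_nth)
    show ?thesis
    proof (cases "l = i")
      case True then show ?thesis using l nth[of l] i by auto
    next
      case False then show ?thesis using l nth[of l] os[of l] by auto
    qed
  qed
  have U2: "\<Union>(set ?r) \<subseteq> \<Union>(set \<rho>)" using U by blast
  show ?thesis unfolding good_def
  proof (intro conjI allI impI ballI)
    fix l assume "l < length ?r"
    then show "?r!l \<noteq> {}" using nth good_ne[OF g] ne by simp
  next
    fix l l' assume l: "l < length ?r" "l' < length ?r" "l \<noteq> l'"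
    then show "?r!l \<inter> ?r!l' = {}"
      using nth[of l] nth[of l'] good_dj[OF g, of l l'] l
      by (cases "l = i"; cases "l' = i") auto
  next
    fix x assume x: "x \<in> \<Union>(set ?r)"
    then have a: "x \<in> \<Union>(set \<rho>)" "x \<noteq> s" using U by auto
    then obtain l where l: "l < length \<rho>" "x \<in> \<rho>!l" by (auto simp: in_set_conv_nth)
    have "\<bar>x\<bar> < \<bar>s\<bar>" by (rule xl[OF l a(2)])
    then show "-x \<notin> \<Union>(set ?r)" "x \<noteq> 0" "\<bar>x\<bar> \<le> int n"
      using goodU[OF g a(1)] U2 s by auto
  next
    show "sorted (map bmin ?r)" using bm g unfolding good_def by simp
  qed
qed

lemma last_single:
  assumes g: "good (Suc n) \<rho>" and i: "i < length \<rho>" and s: "\<bar>s\<bar> = int n + 1"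
    and si: "\<rho>!i = {s}"
  shows "i = length \<rho> - 1" "good n (butlast \<rho>)"
proof -
  have si': "s \<in> \<rho>!i" using si by simp
  have ms: "-s \<notin> \<rho>!l" if "l < length \<rho>" for l using goodD(3)[OF g i si' that] .
  have os: "s \<notin> \<rho>!l" if "l < length \<rho>" "l \<noteq> i" for l using goodD(4)[OF g i si' that] .
  have xl: "\<bar>x\<bar> < \<bar>s\<bar>" if "l < length \<rho>" "x \<in> \<rho>!l" "l \<noteq> i" for x l
  proof -
    have "\<bar>x\<bar> \<le> int (Suc n)" using goodD(2)[OF g that(1,2)] .
    moreover have "x \<noteq> -s" using ms[OF that(1)] that(2) by blast
    moreover have "x \<noteq> s" using os[OF that(1,3)] that(2) by blast
    ultimately show ?thesis using s by (cases "x \<ge> 0"; cases "s \<ge> 0") auto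
  qed
  have so: "sorted (map bmin \<rho>)" using g unfolding good_def by simp
  show li: "i = length \<rho> - 1"
  proof (rule ccontr)
    assume "i \<noteq> length \<rho> - 1"
    then have l: "i < length \<rho> - 1" using i by simp
    let ?l = "length \<rho> - 1"
    have l1: "?l < length \<rho>" using i by simp
    obtain x where x: "x \<in> \<rho>!?l" using good_ne[OF g l1] by blast
    have "bmin (\<rho>!i) \<le> bmin (\<rho>!?l)" using sorted_nth_mono[OF so, of i ?l] l l1 by simp
    also have "\<dots> \<le> \<bar>x\<bar>" using bmin_le good_fin[OF g l1] x by blast
    also have "\<dots> < \<bar>s\<bar>" using xl[OF l1 x] l by simp
    finally show False using si by (simp add: bmin_single)
  qed
  show "good n (butlast \<rho>)"
  proof (rule good_down)
    show "good (Suc n) (butlast \<rho>)" unfolding good_def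
    proof (intro conjI allI impI ballI)
      fix l assume "l < length (butlast \<rho>)"
      then show "butlast \<rho>!l \<noteq> {}" using good_ne[OF g] by (simp add: nth_butlast)
    next
      fix l l' assume l: "l < length (butlast \<rho>)" "l' < length (butlast \<rho>)" "l \<noteq> l'"
      then show "butlast \<rho>!l \<inter> butlast \<rho>!l' = {}"
        using g unfolding good_def by (simp add: nth_butlast)
    next
      fix x assume x: "x \<in> \<Union>(set (butlast \<rho>))"
      then have "x \<in> \<Union>(set \<rho>)" by (meson UnionE UnionI in_set_butlastD)
      moreover have "\<Union>(set (butlast \<rho>)) \<subseteq> \<Union>(set \<rho>)" by (meson Sup_subset_mono in_set_butlastD subsetI)
      ultimately show "-x \<notin> \<Union>(set (butlast \<rho>))" "x \<noteq> 0" "\<bar>x\<bar> \<le> int (Suc n)"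
        using goodU[OF g] by blast+
    next
      show "sorted (map bmin (butlast \<rho>))" using so by (simp add: map_butlast sorted_butlast)
    qed
  next
    show "\<forall>x\<in>\<Union>(set (butlast \<rho>)). \<bar>x\<bar> \<noteq> int n + 1"
    proof
      fix x assume "x \<in> \<Union>(set (butlast \<rho>))"
      then obtain l where l: "l < length (butlast \<rho>)" "x \<in> butlast \<rho> ! l" by (auto simp: in_set_conv_nth)
      then have l2: "l < length \<rho>" "x \<in> \<rho>!l" "l \<noteq> i" using li by (auto simp: nth_butlast)
      show "\<bar>x\<bar> \<noteq> int n + 1" using xl[OF l2] s by simp
    qed
  qed
qed




definition gg :: "int set list \<times> (nat \<times> int) option \<Rightarrow> int set list" where
 "gg x = (case x of (\<pi>, None) \<Rightarrow> \<pi> | (\<pi>, Some (i, s)) \<Rightarrow>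
    if i < length \<pi> then \<pi>[i := insert s (\<pi>!i)] else \<pi> @ [{s}])"

definition hh :: "nat \<Rightarrow> int set list \<Rightarrow> int set list \<times> (nat \<times> int) option" where
 "hh n \<rho> = (if \<exists>p. fst p < length \<rho> \<and> \<bar>snd p\<bar> = int n + 1 \<and> snd p \<in> \<rho>!fst p then
    (let p = (SOME p. fst p < length \<rho> \<and> \<bar>snd p\<bar> = int n + 1 \<and> snd p \<in> \<rho>!fst p) in
     if \<rho>!fst p = {snd p} then (butlast \<rho>, Some (length \<rho>, snd p))
     else (\<rho>[fst p := \<rho>!fst p - {snd p}], Some p))
   else (\<rho>, None))"

definition Dom :: "nat \<Rightarrow> nat \<Rightarrow> (int set list \<times> (nat \<times> int) option) set" where
 "Dom n j = (\<lambda>\<pi>. (\<pi>, None)) ` PP n (Suc j)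
   \<union> (\<lambda>(\<pi>,i,s). (\<pi>, Some (i,s))) ` (PP n (Suc j) \<times> ({..<Suc j} \<times> {int n + 1, -(int n + 1)}))
   \<union> (\<lambda>(\<pi>,s). (\<pi>, Some (Suc j, s))) ` (PP n j \<times> {int n + 1, -(int n + 1)})"

lemma hh_eq:
  assumes g: "good m \<rho>" and i: "i < length \<rho>" and s: "\<bar>s\<bar> = int n + 1" and si: "s \<in> \<rho>!i"
  shows "hh n \<rho> = (if \<rho>!i = {s} then (butlast \<rho>, Some (length \<rho>, s))
                    else (\<rho>[i := \<rho>!i - {s}], Some (i, s)))"
proof -
  let ?P = "\<lambda>p. fst p < length \<rho> \<and> \<bar>snd p\<bar> = int n + 1 \<and> snd p \<in> \<rho>!fst p"
  have P: "?P (i,s)" using i s si by simp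
  have u: "p = (i,s)" if "?P p" for p
  proof -
    obtain i' s' where p: "p = (i',s')" by (cases p)
    have i': "i' < length \<rho>" "\<bar>s'\<bar> = int n + 1" "s' \<in> \<rho>!i'" using that p by auto
    have "s' = s \<or> s' = -s" using i'(2) s by arith
    moreover have "s' \<noteq> -s" using goodD(3)[OF g i si i'(1)] i'(3) by blast
    ultimately have ss: "s' = s" by blast
    have "i' = i" using goodD(4)[OF g i si i'(1)] i'(3) ss by blast
    then show ?thesis using p ss by simp
  qed
  have "(SOME p. ?P p) = (i,s)" using P u by (rule some_equality)
  moreover have "\<exists>p. ?P p" using P by blast
  ultimately show ?thesis unfolding hh_def Let_def by simp
qed

lemma hh_none: "(\<forall>i<length \<rho>. \<forall>s. \<bar>s\<bar> = int n + 1 \<longrightarrow> s \<notin> \<rho>!i) \<Longrightarrow> hh n \<rho> = (\<rho>, None)"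
  unfolding hh_def by auto

lemma hh_gg: "x \<in> Dom n j \<Longrightarrow> hh n (gg x) = x"
proof -
  assume "x \<in> Dom n j"
  then consider (a) \<pi> where "\<pi> \<in> PP n (Suc j)" "x = (\<pi>, None)"
    | (b) \<pi> i s where "\<pi> \<in> PP n (Suc j)" "i < Suc j" "s \<in> {int n + 1, -(int n + 1)}" "x = (\<pi>, Some (i,s))"
    | (c) \<pi> s where "\<pi> \<in> PP n j" "s \<in> {int n + 1, -(int n + 1)}" "x = (\<pi>, Some (Suc j, s))"
    unfolding Dom_def by auto
  then show ?thesis
  proof cases
    case a
    have g: "good n \<pi>" using a by (simp add: PP_def)
    have "\<forall>i<length \<pi>. \<forall>s. \<bar>s\<bar> = int n + 1 \<longrightarrow> s \<notin> \<pi>!i" using goodD(2)[OF g] by force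
    then show ?thesis using a by (simp add: gg_def hh_none)
  next
    case b
    have g: "good n \<pi>" and len: "length \<pi> = Suc j" using b by (auto simp: PP_def)
    have i: "i < length \<pi>" using b len by simp
    have s: "\<bar>s\<bar> = int n + 1" using b by auto
    let ?r = "\<pi>[i := insert s (\<pi>!i)]"
    have gr: "gg x = ?r" using b i by (simp add: gg_def)
    have g': "good (Suc n) ?r" by (rule ins_good[OF g i s])
    have sn: "s \<notin> \<pi>!i" using goodD(2)[OF g i] s by force
    have si: "s \<in> ?r!i" using i by simp
    have ne: "?r!i \<noteq> {s}" using good_ne[OF g i] sn i by auto
    have "hh n ?r = (?r[i := ?r!i - {s}], Some (i,s))" using hh_eq[OF g' _ s si] i ne by simp
    also have "?r[i := ?r!i - {s}] = \<pi>" using i sn by simp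
    finally show ?thesis using gr b by simp
  next
    case c
    have g: "good n \<pi>" and len: "length \<pi> = j" using c by (auto simp: PP_def)
    have s: "\<bar>s\<bar> = int n + 1" using c by auto
    let ?r = "\<pi> @ [{s}]"
    have gr: "gg x = ?r" using c len by (simp add: gg_def)
    have g': "good (Suc n) ?r" by (rule app_good[OF g s])
    have "hh n ?r = (butlast ?r, Some (length ?r, s))"
      using hh_eq[OF g', of j s] len s by (simp add: nth_append)
    then show ?thesis using gr c len by simp
  qed
qed

lemma gg_hh:
  assumes r: "\<rho> \<in> PP (Suc n) (Suc j)"
  shows "hh n \<rho> \<in> Dom n j \<and> gg (hh n \<rho>) = \<rho>"
proof -
  have g: "good (Suc n) \<rho>" and len: "length \<rho> = Suc j" using r by (auto simp: PP_def)
  show ?thesis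
  proof (cases "\<exists>i<length \<rho>. \<exists>s. \<bar>s\<bar> = int n + 1 \<and> s \<in> \<rho>!i")
    case True
    then obtain i s where i: "i < length \<rho>" and s: "\<bar>s\<bar> = int n + 1" and si: "s \<in> \<rho>!i" by blast
    have sS: "s \<in> {int n + 1, -(int n + 1)}" using s by (cases "s \<ge> 0") auto
    show ?thesis
    proof (cases "\<rho>!i = {s}")
      case True
      have li: "i = length \<rho> - 1" and gb: "good n (butlast \<rho>)" using last_single[OF g i s True] by auto
      have h: "hh n \<rho> = (butlast \<rho>, Some (Suc j, s))" using hh_eq[OF g i s si] True len by simp
      have "butlast \<rho> \<in> PP n j" using gb len by (simp add: PP_def)
      then have "(butlast \<rho>, s) \<in> PP n j \<times> {int n + 1, -(int n + 1)}" using sS by simp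
      then have "(butlast \<rho>, Some (Suc j, s)) \<in> (\<lambda>(\<pi>,s). (\<pi>, Some (Suc j, s))) ` (PP n j \<times> {int n + 1, -(int n + 1)})"
        by (rule rev_image_eqI) simp
      then have "hh n \<rho> \<in> Dom n j" unfolding Dom_def h by (rule UnI2)
      moreover have "gg (hh n \<rho>) = \<rho>"
      proof -
        have "gg (hh n \<rho>) = butlast \<rho> @ [{s}]" using h len by (simp add: gg_def)
        also have "\<dots> = butlast \<rho> @ [last \<rho>]"
        proof -
          have ne: "\<rho> \<noteq> []" using len by auto
          show ?thesis using True li len by (simp add: last_conv_nth[OF ne])
        qed
        also have "\<dots> = \<rho>" using len by (metis append_butlast_last_id list.size(3) nat.distinct(1))
        finally show ?thesis .
      qed
      ultimately show ?thesis by blast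
    next
      case False
      have h: "hh n \<rho> = (\<rho>[i := \<rho>!i - {s}], Some (i, s))" using hh_eq[OF g i s si] False by simp
      have "good n (\<rho>[i := \<rho>!i - {s}])" by (rule del_good[OF g i s si False])
      then have "\<rho>[i := \<rho>!i - {s}] \<in> PP n (Suc j)" using len by (simp add: PP_def)
      then have "(\<rho>[i := \<rho>!i - {s}], i, s) \<in> PP n (Suc j) \<times> ({..<Suc j} \<times> {int n + 1, -(int n + 1)})"
        using sS i len by simp
      then have "(\<rho>[i := \<rho>!i - {s}], Some (i, s)) \<in> (\<lambda>(\<pi>,i,s). (\<pi>, Some (i,s))) ` (PP n (Suc j) \<times> ({..<Suc j} \<times> {int n + 1, -(int n + 1)}))"
        by (rule rev_image_eqI) simp
      then have mem: "(\<rho>[i := \<rho>!i - {s}], Some (i, s)) \<in> (\<lambda>(\<pi>,i,s). (\<pi>, Some (i,s))) ` (PP n (Suc j) \<times> ({..<Suc j} \<times> {int n + 1, -(int n + 1)}))" .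
      have "hh n \<rho> \<in> Dom n j" unfolding Dom_def h by (rule UnI1[OF UnI2[OF mem]])
      moreover have "gg (hh n \<rho>) = \<rho>" using h i si by (simp add: gg_def insert_absorb)
      ultimately show ?thesis by blast
    qed
  next
    case False
    have h: "hh n \<rho> = (\<rho>, None)" using False by (intro hh_none) blast
    have "\<forall>x\<in>\<Union>(set \<rho>). \<bar>x\<bar> \<noteq> int n + 1" using False by (auto simp: in_set_conv_nth)
    then have "good n \<rho>" using g by (rule good_down[rotated])
    then have mem: "\<rho> \<in> PP n (Suc j)" using len by (simp add: PP_def)
    have "hh n \<rho> \<in> Dom n j" unfolding Dom_def h by (rule UnI1[OF UnI1[OF imageI[OF mem]]])
    moreover have "gg (hh n \<rho>) = \<rho>" by (simp add: h gg_def)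
    ultimately show ?thesis by blast
  qed
qed

lemma gg_PP: "x \<in> Dom n j \<Longrightarrow> gg x \<in> PP (Suc n) (Suc j)"
proof -
  assume "x \<in> Dom n j"
  then consider (a) \<pi> where "\<pi> \<in> PP n (Suc j)" "x = (\<pi>, None)"
    | (b) \<pi> i s where "\<pi> \<in> PP n (Suc j)" "i < Suc j" "s \<in> {int n + 1, -(int n + 1)}" "x = (\<pi>, Some (i,s))"
    | (c) \<pi> s where "\<pi> \<in> PP n j" "s \<in> {int n + 1, -(int n + 1)}" "x = (\<pi>, Some (Suc j, s))"
    unfolding Dom_def by auto
  then show ?thesis
  proof cases
    case a
    have "good n \<pi>" "length \<pi> = Suc j" using a by (auto simp: PP_def)
    then have "good (Suc n) \<pi>" "length \<pi> = Suc j" using good_mono[of n \<pi> "Suc n"] by auto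
    then show ?thesis using a by (simp add: PP_def gg_def)
  next
    case b
    have g: "good n \<pi>" and len: "length \<pi> = Suc j" using b by (auto simp: PP_def)
    have i: "i < length \<pi>" using b len by simp
    have s: "\<bar>s\<bar> = int n + 1" using b by auto
    have "good (Suc n) (\<pi>[i := insert s (\<pi>!i)])" by (rule ins_good[OF g i s])
    then show ?thesis using b i len by (simp add: gg_def PP_def)
  next
    case c
    have g: "good n \<pi>" and len: "length \<pi> = j" using c by (auto simp: PP_def)
    have s: "\<bar>s\<bar> = int n + 1" using c by auto
    have "good (Suc n) (\<pi> @ [{s}])" by (rule app_good[OF g s])
    then show ?thesis using c len by (simp add: gg_def PP_def)
  qed
qed

lemma sum_bij: "(\<Sum>\<rho>\<in>PP (Suc n) (Suc j). f \<rho>) = (\<Sum>x\<in>Dom n j. f (gg x))"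
  by (rule sum.reindex_bij_witness[where i=gg and j="hh n"]) (simp_all add: hh_gg gg_PP gg_hh)




lemma w_ins:
  fixes q :: "'a::comm_ring_1"
  assumes P: "\<pi> \<in> PP n k" and i: "i < k" and s: "\<bar>s\<bar> = int n + 1"
  shows "q ^ nat (mstat (\<pi>[i := insert s (\<pi>!i)])) = q ^ nat (mstat \<pi>) * q ^ (2*i + 2 - (if s > 0 then 1 else 0))"
proof -
  have g: "good n \<pi>" and len: "length \<pi> = k" using P by (auto simp: PP_def)
  have i': "i < length \<pi>" using i len by simp
  have m0: "mstat \<pi> \<ge> 0" by (rule mstat_nonneg[OF g])
  have "nat (mstat (\<pi>[i := insert s (\<pi>!i)])) = nat (mstat \<pi>) + (2*i + 2 - (if s > 0 then 1 else 0))"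
    using mstat_ins[OF g i' s] m0 by (cases "s > 0") auto
  then show ?thesis by (simp add: power_add)
qed

lemma w_app:
  fixes q :: "'a::comm_ring_1"
  assumes P: "\<pi> \<in> PP n j" and s: "\<bar>s\<bar> = int n + 1"
  shows "q ^ nat (mstat (\<pi> @ [{s}])) = q ^ nat (mstat \<pi>) * q ^ (2*j + 2 - (if s > 0 then 1 else 0))"
proof -
  have g: "good n \<pi>" and len: "length \<pi> = j" using P by (auto simp: PP_def)
  have m0: "mstat \<pi> \<ge> 0" by (rule mstat_nonneg[OF g])
  have "nat (mstat (\<pi> @ [{s}])) = nat (mstat \<pi>) + (2*j + 2 - (if s > 0 then 1 else 0))"
    using mstat_app[OF g s] m0 len by (cases "s > 0") auto
  then show ?thesis by (simp add: power_add)
qed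

lemma sum_S: "(\<Sum>s\<in>{int n + 1, -(int n + 1)}. f s) = f (int n + 1) + (f (-(int n + 1)) :: 'a::comm_monoid_add)"
proof -
  have "int n + 1 \<noteq> -(int n + 1)" by simp
  then show ?thesis by simp
qed

lemma qint_odd: "qint q (2*k+1) = 1 + (\<Sum>i<k. q^(2*i+1) + q^(2*i+2))"
proof (induction k)
  case 0 then show ?case by (simp add: qint_def)
next
  case (Suc k)
  have "qint q (2*Suc k+1) = qint q (2*k+1) + q^(2*k+1) + q^(2*k+2)"
    unfolding qint_def by (simp add: algebra_simps)
  then show ?case using Suc by (simp add: algebra_simps)
qed

lemma F_rec:
  fixes q :: "'a::comm_ring_1"
  shows "(\<Sum>\<pi>\<in>PP (Suc n) (Suc j). q ^ nat (mstat \<pi>))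
    = (\<Sum>\<pi>\<in>PP n (Suc j). q ^ nat (mstat \<pi>)) * qint q (2 * Suc j + 1)
      + (\<Sum>\<pi>\<in>PP n j. q ^ nat (mstat \<pi>)) * (q ^ (2*j+1) + q ^ (2*j+2))"
proof -
  define w where "w = (\<lambda>\<pi>. q ^ nat (mstat \<pi>))"
  define S where "S = {int n + 1, -(int n + 1)}"
  define D1 where "D1 = (\<lambda>\<pi>. (\<pi>, None :: (nat \<times> int) option)) ` PP n (Suc j)"
  define f2 where "f2 = (\<lambda>(\<pi>::int set list, i::nat, s::int). (\<pi>, Some (i,s)))"
  define f3 where "f3 = (\<lambda>(\<pi>::int set list, s::int). (\<pi>, Some (Suc j, s)))"
  define D2 where "D2 = f2 ` (PP n (Suc j) \<times> ({..<Suc j} \<times> S))"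
  define D3 where "D3 = f3 ` (PP n j \<times> S)"
  have Dom: "Dom n j = D1 \<union> D2 \<union> D3" unfolding Dom_def D1_def D2_def D3_def f2_def f3_def S_def ..
  have fin: "finite D1" "finite D2" "finite D3" unfolding D1_def D2_def D3_def S_def
    by (simp_all add: finite_PP)
  have dis: "(D1 \<union> D2) \<inter> D3 = {}" "D1 \<inter> D2 = {}"
    unfolding D1_def D2_def D3_def f2_def f3_def by auto
  have "(\<Sum>\<pi>\<in>PP (Suc n) (Suc j). w \<pi>) = (\<Sum>x\<in>Dom n j. w (gg x))" by (rule sum_bij)
  also have "\<dots> = (\<Sum>x\<in>D1. w (gg x)) + (\<Sum>x\<in>D2. w (gg x)) + (\<Sum>x\<in>D3. w (gg x))"
    unfolding Dom using fin dis by (simp add: sum.union_disjoint)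
  also have "(\<Sum>x\<in>D1. w (gg x)) = (\<Sum>\<pi>\<in>PP n (Suc j). w \<pi>)"
    unfolding D1_def by (subst sum.reindex) (auto simp: inj_on_def gg_def)
  also have "(\<Sum>x\<in>D2. w (gg x)) = (\<Sum>y\<in>PP n (Suc j) \<times> ({..<Suc j} \<times> S). w (gg (f2 y)))"
    unfolding D2_def by (subst sum.reindex) (auto simp: inj_on_def f2_def)
  also have "\<dots> = (\<Sum>y\<in>PP n (Suc j) \<times> ({..<Suc j} \<times> S).
        (case y of (\<pi>, i, s) \<Rightarrow> w \<pi> * q ^ (2*i + 2 - (if s > 0 then 1 else 0))))"
  proof (rule sum.cong)
    fix y assume y: "y \<in> PP n (Suc j) \<times> ({..<Suc j} \<times> S)"
    then obtain \<pi> i s where yy: "y = (\<pi>, i, s)" and P: "\<pi> \<in> PP n (Suc j)" and i: "i < Suc j" and sS: "s \<in> S"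
      by auto
    have len: "length \<pi> = Suc j" using P by (simp add: PP_def)
    have s: "\<bar>s\<bar> = int n + 1" using sS by (auto simp: S_def)
    show "w (gg (f2 y)) = (case y of (\<pi>, i, s) \<Rightarrow> w \<pi> * q ^ (2*i + 2 - (if s > 0 then 1 else 0)))"
      using w_ins[OF P i s, of q] i len unfolding yy f2_def w_def by (simp add: gg_def)
  qed simp
  also have "\<dots> = (\<Sum>\<pi>\<in>PP n (Suc j). \<Sum>i<Suc j. \<Sum>s\<in>S. w \<pi> * q ^ (2*i + 2 - (if s > 0 then 1 else 0)))"
    by (simp add: sum.cartesian_product)
  also have "\<dots> = (\<Sum>\<pi>\<in>PP n (Suc j). w \<pi> * (\<Sum>i<Suc j. q^(2*i+1) + q^(2*i+2)))"
    unfolding S_def sum_S by (simp add: sum_distrib_left algebra_simps)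
  also have "(\<Sum>x\<in>D3. w (gg x)) = (\<Sum>y\<in>PP n j \<times> S. w (gg (f3 y)))"
    unfolding D3_def by (subst sum.reindex) (auto simp: inj_on_def f3_def)
  also have "\<dots> = (\<Sum>y\<in>PP n j \<times> S. (case y of (\<pi>, s) \<Rightarrow> w \<pi> * q ^ (2*j + 2 - (if s > 0 then 1 else 0))))"
  proof (rule sum.cong)
    fix y assume y: "y \<in> PP n j \<times> S"
    then obtain \<pi> s where yy: "y = (\<pi>, s)" and P: "\<pi> \<in> PP n j" and sS: "s \<in> S"
      by auto
    have len: "length \<pi> = j" using P by (simp add: PP_def)
    have s: "\<bar>s\<bar> = int n + 1" using sS by (auto simp: S_def)
    show "w (gg (f3 y)) = (case y of (\<pi>, s) \<Rightarrow> w \<pi> * q ^ (2*j + 2 - (if s > 0 then 1 else 0)))"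
      using w_app[OF P s, of q] len unfolding yy f3_def w_def by (simp add: gg_def)
  qed simp
  also have "\<dots> = (\<Sum>\<pi>\<in>PP n j. \<Sum>s\<in>S. w \<pi> * q ^ (2*j + 2 - (if s > 0 then 1 else 0)))"
    by (simp add: sum.cartesian_product)
  also have "\<dots> = (\<Sum>\<pi>\<in>PP n j. w \<pi> * (q ^ (2*j+1) + q ^ (2*j+2)))"
    unfolding S_def sum_S by (intro sum.cong refl) (simp add: algebra_simps)
  also have "\<dots> = (\<Sum>\<pi>\<in>PP n j. w \<pi>) * (q ^ (2*j+1) + q ^ (2*j+2))"
    by (rule sum_distrib_right[symmetric])
  also have "(\<Sum>\<pi>\<in>PP n (Suc j). w \<pi> * (\<Sum>i<Suc j. q^(2*i+1) + q^(2*i+2)))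
     = (\<Sum>\<pi>\<in>PP n (Suc j). w \<pi>) * (\<Sum>i<Suc j. q^(2*i+1) + q^(2*i+2))"
    by (rule sum_distrib_right[symmetric])
  finally have X: "(\<Sum>\<pi>\<in>PP (Suc n) (Suc j). w \<pi>) = (\<Sum>\<pi>\<in>PP n (Suc j). w \<pi>) +
     (\<Sum>\<pi>\<in>PP n (Suc j). w \<pi>) * (\<Sum>i<Suc j. q^(2*i+1) + q^(2*i+2)) +
     (\<Sum>\<pi>\<in>PP n j. w \<pi>) * (q ^ (2*j+1) + q ^ (2*j+2))" .
  have Q: "qint q (2 * Suc j + 1) = 1 + (\<Sum>i<Suc j. q^(2*i+1) + q^(2*i+2))" by (rule qint_odd)
  show ?thesis unfolding Q using X unfolding w_def by (simp only: distrib_left mult_1_right)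
qed




lemma PP_0: "PP n 0 = {[]}" by (auto simp: PP_def good_def)

lemma PP_empty: "PP 0 (Suc j) = {}"
proof -
  have False if "\<pi> \<in> PP 0 (Suc j)" for \<pi>
  proof -
    have g: "good 0 \<pi>" and len: "length \<pi> = Suc j" using that by (auto simp: PP_def)
    have l: "0 < length \<pi>" using len by simp
    obtain x where x: "x \<in> \<pi>!0" using good_ne[OF g l] by blast
    show False using goodD(1)[OF g l x] goodD(2)[OF g l x] by simp
  qed
  then show ?thesis by blast
qed

lemma mstat_nil: "mstat [] = 0" by (simp add: mstat_def pos_def)

lemma SB_0: "SB q n 0 = 1" by (induction n) (simp_all add: qint_def)

lemma qint_2: "qint q 2 = 1 + q" by (simp add: qint_def numeral_2_eq_2)

lemma SB_empty: "SB q 0 (Suc j) = 0" by simp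

lemma main_identity:
  fixes q :: "'a::comm_ring_1"
  shows "q ^ (k ^ 2) * (qint q 2) ^ k * SB q n k = (\<Sum>\<pi>\<in>PP n k. q ^ nat (mstat \<pi>))"
proof (induction n arbitrary: k)
  case 0
  then show ?case by (cases k) (simp_all add: PP_0 PP_empty mstat_nil)
next
  case (Suc n)
  show ?case
  proof (cases k)
    case 0
    then show ?thesis by (simp add: PP_0 mstat_nil SB_0)
  next
    case (Suc j)
    have e1: "q ^ ((Suc j)^2) = q ^ (j^2) * q ^ (2*j+1)"
    proof -
      have "(Suc j)^2 = j^2 + (2*j+1)" by (simp add: power2_eq_square)
      then show ?thesis by (simp add: power_add)
    qed
    have e2: "q ^ (2*j+1) + q ^ (2*j+2) = q ^ (2*j+1) * qint q 2"
      by (simp add: qint_2 algebra_simps)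
    show ?thesis unfolding Suc F_rec Suc.IH[symmetric]
      by (simp add: e1 e2 qint_2 algebra_simps)
  qed
qed

theorem proposition3p2:
  fixes q :: "'a::comm_ring_1" and n k :: nat
  assumes "k \<le> n"
  shows "q ^ (k ^ 2) * (qint q 2) ^ k * SB q n k
           = (\<Sum>\<pi>\<in>pssp {1..int n} k. q ^ nat (mstat \<pi>))"
  unfolding pssp_eq by (rule main_identity)


end
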